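(* Let $R$ be a ring with identity, ${}_RM$ a finitely generated semisimple left $R$-module and $\varphi:M\to M$ a nilpotent $R$-endomorphism. Then the centralizer $C_\varphi=\{\psi\in\mathrm{Hom}_R(M,M)\mid\psi\circ\varphi=\varphi\circ\psi\}$, as a $Z(R)$-submodule of $\mathrm{Hom}_R(M,M)$, is a homomorphic image (as $Z(R)$-modules) of some $Z(R)$-submodule of a certain left $R$-submodule of $M_{m\times m}(R[t])$ generated by $md$ elements, where $d=\dim_R(M)$ and $m=\dim_R(\ker(\varphi))$.
   Context: $Z(R)$ is the centre of $R$, $R[t]$ the polynomial ring in a commuting indeterminate $t$, and $\dim_R$ denotes composition length. *)

theory Defs
  imports "HOL-Computational_Algebra.Polynomial" "HOL-Library.Function_Algebras"
begin

text \<open>Left modules over a (not necessarily commutative) ring 'r, given by a scalar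
action on an abelian group type.  The whole type 'm plays the role of the module M.\<close>

definition left_module :: "('r::ring_1 \<Rightarrow> 'm::ab_group_add \<Rightarrow> 'm) \<Rightarrow> bool" where
  "left_module smul \<longleftrightarrow>
     (\<forall>r x y. smul r (x + y) = smul r x + smul r y) \<and>
     (\<forall>r s x. smul (r + s) x = smul r x + smul s x) \<and>
     (\<forall>r s x. smul (r * s) x = smul r (smul s x)) \<and>
     (\<forall>x. smul 1 x = x)"

text \<open>N is a submodule w.r.t. scalars from S (contains 0, closed under + and
scalar multiplication by elements of S; closure under negation follows since
-1 is a scalar in all uses below).\<close>
definition is_submod :: "('s \<Rightarrow> 'v::ab_group_add \<Rightarrow> 'v) \<Rightarrow> 's set \<Rightarrow> 'v set \<Rightarrow> bool" where
  "is_submod act S N \<longleftrightarrow> 0 \<in> N \<and> (\<forall>x\<in>N. \<forall>y\<in>N. x + y \<in> N) \<and> (\<forall>s\<in>S. \<forall>x\<in>N. act s x \<in> N)"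

definition span :: "('s \<Rightarrow> 'v::ab_group_add \<Rightarrow> 'v) \<Rightarrow> 's set \<Rightarrow> 'v set \<Rightarrow> 'v set" where
  "span act S X = \<Inter>{N. is_submod act S N \<and> X \<subseteq> N}"

definition fin_gen :: "('r::ring_1 \<Rightarrow> 'm::ab_group_add \<Rightarrow> 'm) \<Rightarrow> bool" where
  "fin_gen smul \<longleftrightarrow> (\<exists>G. finite G \<and> span smul UNIV G = UNIV)"

definition simple_submod :: "('r::ring_1 \<Rightarrow> 'm::ab_group_add \<Rightarrow> 'm) \<Rightarrow> 'm set \<Rightarrow> bool" where
  "simple_submod smul N \<longleftrightarrow> is_submod smul UNIV N \<and> N \<noteq> {0} \<and>
     (\<forall>K. is_submod smul UNIV K \<and> K \<subseteq> N \<longrightarrow> K = {0} \<or> K = N)"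

definition semisimple :: "('r::ring_1 \<Rightarrow> 'm::ab_group_add \<Rightarrow> 'm) \<Rightarrow> bool" where
  "semisimple smul \<longleftrightarrow> span smul UNIV (\<Union>{N. simple_submod smul N}) = UNIV"

definition mod_length :: "('r::ring_1 \<Rightarrow> 'm::ab_group_add \<Rightarrow> 'm) \<Rightarrow> 'm set \<Rightarrow> nat" where
  "mod_length smul N = Sup {n. \<exists>c::nat \<Rightarrow> 'm set. c 0 = {0} \<and> c n = N \<and>
      (\<forall>i\<le>n. is_submod smul UNIV (c i)) \<and> (\<forall>i<n. c i \<subset> c (Suc i))}"

definition is_endo :: "('r::ring_1 \<Rightarrow> 'm::ab_group_add \<Rightarrow> 'm) \<Rightarrow> ('m \<Rightarrow> 'm) \<Rightarrow> bool" where
  "is_endo smul f \<longleftrightarrow> (\<forall>x y. f (x + y) = f x + f y) \<and> (\<forall>r x. f (smul r x) = smul r (f x))"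

definition centralizer :: "('r::ring_1 \<Rightarrow> 'm::ab_group_add \<Rightarrow> 'm) \<Rightarrow> ('m \<Rightarrow> 'm) \<Rightarrow> ('m \<Rightarrow> 'm) set" where
  "centralizer smul \<phi> = {\<psi>. is_endo smul \<psi> \<and> \<psi> \<circ> \<phi> = \<phi> \<circ> \<psi>}"

definition ring_center :: "'r::ring_1 set" where
  "ring_center = {z. \<forall>r. z * r = r * z}"

definition hom_smul :: "('r \<Rightarrow> 'm \<Rightarrow> 'm) \<Rightarrow> 'r \<Rightarrow> ('m \<Rightarrow> 'm) \<Rightarrow> ('m \<Rightarrow> 'm)" where
  "hom_smul smul z \<psi> = (\<lambda>x. smul z (\<psi> x))"

text \<open>m x m matrices over R[t], as functions nat => nat => 'r poly vanishing outside
{0..<m} x {0..<m}, with the left R-action by coefficientwise left multiplication.\<close>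
definition poly_mats :: "nat \<Rightarrow> (nat \<Rightarrow> nat \<Rightarrow> 'r::ring_1 poly) set" where
  "poly_mats m = {A. \<forall>i j. (m \<le> i \<or> m \<le> j) \<longrightarrow> A i j = 0}"

definition mat_smul :: "'r::ring_1 \<Rightarrow> (nat \<Rightarrow> nat \<Rightarrow> 'r poly) \<Rightarrow> (nat \<Rightarrow> nat \<Rightarrow> 'r poly)" where
  "mat_smul r A = (\<lambda>i j. map_poly (\<lambda>a. r * a) (A i j))"

end

theory Submission
  imports Defs
begin



definition ssum :: "'m::ab_group_add set \<Rightarrow> 'm set \<Rightarrow> 'm set" where
  "ssum A B = {a + b | a b. a \<in> A \<and> b \<in> B}"

fun msum :: "'m::ab_group_add set list \<Rightarrow> 'm set" where
  "msum [] = {0}" | "msum (S # L) = ssum S (msum L)"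

lemma ssum_assoc: "ssum (ssum A B) C = ssum A (ssum B C)"
  unfolding ssum_def by (auto, metis add.assoc, metis add.assoc)

lemma ssum_commute: "ssum A B = ssum B A"
  unfolding ssum_def by (auto, metis add.commute, metis add.commute)

lemma ssum_zero[simp]: "ssum {0} A = A" "ssum A {0} = A"
  unfolding ssum_def by auto

lemma msum_append: "msum (A @ B) = ssum (msum A) (msum B)"
  by (induction A) (auto simp: ssum_assoc)




locale lmod =
  fixes smul :: "'r::ring_1 \<Rightarrow> 'm::ab_group_add \<Rightarrow> 'm"
  assumes lm: "left_module smul"
begin

abbreviation sub where "sub N \<equiv> is_submod smul UNIV N"

lemma sm_add: "smul r (x + y) = smul r x + smul r y"
  and sm_addr: "smul (r + s) x = smul r x + smul s x"
  and sm_mult: "smul (r * s) x = smul r (smul s x)"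
  and sm_one[simp]: "smul 1 x = x"
  using lm unfolding left_module_def by auto

lemma sm_zero[simp]: "smul r 0 = 0"
  by (metis add_cancel_right_right sm_add)

lemma sm_zeror[simp]: "smul 0 x = 0"
  by (metis add_cancel_right_right add_0 sm_addr)

lemma sm_neg: "smul r (- x) = - smul r x"
  by (metis add.right_inverse sm_add sm_zero add.inverse_unique)

lemma sm_negr: "smul (- r) x = - smul r x"
  by (metis add.right_inverse sm_addr sm_zeror add.inverse_unique)

lemma sm_diff: "smul r (x - y) = smul r x - smul r y"
  by (metis diff_conv_add_uminus sm_add sm_neg)

lemma sm_sum: "smul r (sum f A) = sum (\<lambda>i. smul r (f i)) A"
  by (induction A rule: infinite_finite_induct) (auto simp: sm_add)

lemma sm_sumr: "smul (sum f A) x = sum (\<lambda>i. smul (f i) x) A"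
  by (induction A rule: infinite_finite_induct) (auto simp: sm_addr)

lemma sub_0: "sub N \<Longrightarrow> 0 \<in> N"
  and sub_add: "sub N \<Longrightarrow> x \<in> N \<Longrightarrow> y \<in> N \<Longrightarrow> x + y \<in> N"
  and sub_smul: "sub N \<Longrightarrow> x \<in> N \<Longrightarrow> smul r x \<in> N"
  unfolding is_submod_def by auto

lemma sub_neg: "sub N \<Longrightarrow> x \<in> N \<Longrightarrow> - x \<in> N"
  by (metis sub_smul sm_negr sm_one)

lemma sub_diff: "sub N \<Longrightarrow> x \<in> N \<Longrightarrow> y \<in> N \<Longrightarrow> x - y \<in> N"
  by (metis diff_conv_add_uminus sub_add sub_neg)

lemma sub_sum: "sub N \<Longrightarrow> (\<And>i. i \<in> A \<Longrightarrow> f i \<in> N) \<Longrightarrow> sum f A \<in> N"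
  by (induction A rule: infinite_finite_induct) (auto simp: sub_0 sub_add)

lemma sub_UNIV: "sub UNIV" unfolding is_submod_def by auto
lemma sub_zero_set: "sub {0}" unfolding is_submod_def by auto

lemma sub_Int: "sub A \<Longrightarrow> sub B \<Longrightarrow> sub (A \<inter> B)"
  unfolding is_submod_def by auto

lemma sub_ssum: "sub A \<Longrightarrow> sub B \<Longrightarrow> sub (ssum A B)"
  unfolding is_submod_def ssum_def
  apply (intro conjI)
    apply force
   apply (clarsimp, metis (no_types, lifting) add.assoc add.left_commute)
  apply (clarsimp, metis sm_add)
  done

lemma sub_msum: "set L \<subseteq> Collect sub \<Longrightarrow> sub (msum L)"
  by (induction L) (auto simp: sub_zero_set sub_ssum)

lemma ssum_absorb: "S \<subseteq> Y \<Longrightarrow> sub Y \<Longrightarrow> 0 \<in> S \<Longrightarrow> ssum S Y = Y"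
  unfolding ssum_def by (auto intro: sub_add) (metis add_0)

lemma ssum_mono_left: "0 \<in> B \<Longrightarrow> A \<subseteq> ssum A B"
  unfolding ssum_def by force
lemma ssum_mono_right: "0 \<in> A \<Longrightarrow> B \<subseteq> ssum A B"
  unfolding ssum_def by force
lemma ssum_sub_le: "A \<subseteq> N \<Longrightarrow> B \<subseteq> N \<Longrightarrow> sub N \<Longrightarrow> ssum A B \<subseteq> N"
  unfolding ssum_def by (auto intro: sub_add)

lemma msum_0: "set L \<subseteq> Collect sub \<Longrightarrow> 0 \<in> msum L"
  using sub_msum sub_0 by blast

lemma span_sub: "sub (span smul UNIV X)"
  unfolding span_def is_submod_def by auto
lemma span_sup: "X \<subseteq> span smul UNIV X"
  unfolding span_def by auto
lemma span_least: "sub N \<Longrightarrow> X \<subseteq> N \<Longrightarrow> span smul UNIV X \<subseteq> N"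
  unfolding span_def by auto

lemma simple_sub: "simple_submod smul S \<Longrightarrow> sub S"
  unfolding simple_submod_def by auto

lemma simple_gen: assumes "simple_submod smul S" "x \<in> S" "x \<noteq> 0"
  shows "span smul UNIV {x} = S"
proof -
  have "span smul UNIV {x} \<subseteq> S" using assms by (intro span_least) (auto simp: simple_sub)
  moreover have "span smul UNIV {x} \<noteq> {0}" using span_sup[of "{x}"] assms by auto
  moreover have "\<forall>K. sub K \<and> K \<subseteq> S \<longrightarrow> K = {0} \<or> K = S"
    using assms(1) unfolding simple_submod_def by blast
  ultimately show ?thesis using span_sub[of "{x}"] by blast
qed

lemma simple_ne: "simple_submod smul S \<Longrightarrow> \<exists>x\<in>S. x \<noteq> 0"
proof (rule ccontr)
  assume a: "simple_submod smul S" "\<not> (\<exists>x\<in>S. x \<noteq> 0)"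
  then have "S \<subseteq> {0}" by blast
  moreover have "0 \<in> S" using a(1) simple_sub sub_0 by blast
  ultimately have "S = {0}" by blast
  with a(1) show False unfolding simple_submod_def by blast
qed

end



definition chg :: "(nat \<Rightarrow> 'a set) \<Rightarrow> nat \<Rightarrow> nat" where
  "chg c n = card {i. i < n \<and> c i \<noteq> c (Suc i)}"

fun rel_strict :: "'m::ab_group_add set \<Rightarrow> 'm set list \<Rightarrow> bool" where
  "rel_strict K [] = True"
| "rel_strict K (S # L) = (\<not> S \<subseteq> ssum K (msum L) \<and> rel_strict K L)"

lemma chg_le: "chg c n \<le> n"
proof -
  have "{i. i < n \<and> c i \<noteq> c (Suc i)} \<subseteq> {..<n}" by auto
  then show ?thesis unfolding chg_def using card_mono[of "{..<n}"] by fastforce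
qed

lemma chg_Suc: "chg c (Suc n) = chg c n + (if c n \<noteq> c (Suc n) then 1 else 0)"
proof -
  have e: "{i. i < Suc n \<and> c i \<noteq> c (Suc i)} = {i. i < n \<and> c i \<noteq> c (Suc i)} \<union>
     (if c n \<noteq> c (Suc n) then {n} else {})" by (auto simp: less_Suc_eq)
  have f: "finite {i. i < n \<and> c i \<noteq> c (Suc i)}" by simp
  show ?thesis
  proof (cases "c n \<noteq> c (Suc n)")
    case True
    have "n \<notin> {i. i < n \<and> c i \<noteq> c (Suc i)}" by simp
    then show ?thesis using True f unfolding chg_def e by simp
  next
    case False
    then show ?thesis unfolding chg_def e by simp
  qed
qed

lemma chg_cong: "(\<And>i. i \<le> n \<Longrightarrow> c i = c' i) \<Longrightarrow> chg c n = chg c' n"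
  unfolding chg_def by (rule arg_cong[where f=card]) auto

lemma chg_strict: "(\<And>i. i < n \<Longrightarrow> c i \<noteq> c (Suc i)) \<Longrightarrow> chg c n = n"
  unfolding chg_def by (subgoal_tac "{i. i < n \<and> c i \<noteq> c (Suc i)} = {..<n}") auto

context lmod begin

definition wchain :: "'m set \<Rightarrow> (nat \<Rightarrow> 'm set) \<Rightarrow> nat \<Rightarrow> bool" where
  "wchain N c n \<longleftrightarrow> (\<forall>i\<le>n. sub (c i) \<and> c i \<subseteq> N) \<and> (\<forall>i<n. c i \<subseteq> c (Suc i))"

lemma wchain_mono: assumes "wchain N c n" "i \<le> j" "j \<le> n" shows "c i \<subseteq> c j"
  using assms(2,3)
proof (induction j)
  case 0 then show ?case by simp
next
  case (Suc j)
  show ?case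
  proof (cases "i = Suc j")
    case False
    then have "c i \<subseteq> c j" using Suc by simp
    also have "c j \<subseteq> c (Suc j)" using assms(1) Suc.prems unfolding wchain_def by simp
    finally show ?thesis .
  qed simp
qed

lemma wchain_Suc: "wchain N c (Suc n) \<Longrightarrow> wchain N c n"
  unfolding wchain_def by auto

lemma wchain_sub: "wchain N c n \<Longrightarrow> i \<le> n \<Longrightarrow> sub (c i)"
  unfolding wchain_def by auto
lemma wchain_le: "wchain N c n \<Longrightarrow> i \<le> n \<Longrightarrow> c i \<subseteq> N"
  unfolding wchain_def by auto

lemma modular: assumes "sub A" "sub B" "sub M" "A \<subseteq> B" "A \<inter> M = B \<inter> M"
    "ssum A M = ssum B M" shows "A = B"
proof
  show "B \<subseteq> A"
  proof
    fix b assume b: "b \<in> B"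
    have "b \<in> ssum B M" using b sub_0[OF assms(3)] unfolding ssum_def by force
    then have "b \<in> ssum A M" using assms(6) by simp
    then obtain a m where am: "a \<in> A" "m \<in> M" "b = a + m" unfolding ssum_def by blast
    then have "m = b - a" by simp
    moreover have "b - a \<in> B" using sub_diff[OF assms(2) b] am(1) assms(4) by blast
    ultimately have "m \<in> B" by simp
    then have "m \<in> A" using am assms(5) by auto
    then show "b \<in> A" using am sub_add assms(1) by simp
  qed
qed (rule assms(4))

lemma simple_cases: "simple_submod smul S \<Longrightarrow> sub K \<Longrightarrow> K \<subseteq> S \<Longrightarrow> K = {0} \<or> K = S"
  unfolding simple_submod_def by blast

lemma two_val: assumes "simple_submod smul S" "sub M" "sub L" "M \<subseteq> L" "L \<subseteq> ssum S M"
  shows "L = M \<or> L = ssum S M"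
proof -
  have sLS: "sub (L \<inter> S)" using sub_Int[OF assms(3) simple_sub[OF assms(1)]] .
  have c: "L \<inter> S = {0} \<or> L \<inter> S = S" using simple_cases[OF assms(1) sLS Int_lower2] .
  show ?thesis
  proof (cases "L \<inter> S = S")
    case True
    then have "S \<subseteq> L" by blast
    then have "ssum S M \<subseteq> L" using ssum_sub_le[OF _ assms(4) assms(3)] by blast
    then show ?thesis using assms(5) by blast
  next
    case False
    then have z: "L \<inter> S = {0}" using c by blast
    have "L \<subseteq> M"
    proof
      fix x assume x: "x \<in> L"
      then obtain s m where sm: "s \<in> S" "m \<in> M" "x = s + m" using assms(5) unfolding ssum_def by auto
      then have "s = x - m" by simp
      moreover have "x - m \<in> L" using sub_diff[OF assms(3) x] sm(2) assms(4) by blast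
      ultimately have "s \<in> L" by simp
      then have "s = 0" using z sm by blast
      then show "x \<in> M" using sm by simp
    qed
    then show ?thesis using assms(4) by blast
  qed
qed

end



context lmod begin

lemma ssum_mono: "A \<subseteq> B \<Longrightarrow> ssum A C \<subseteq> ssum B C"
  unfolding ssum_def by blast

lemma chain_bound:
  assumes "set Ss \<subseteq> Collect (simple_submod smul)" "wchain (msum Ss) c n"
  shows "chg c n \<le> length Ss"
  using assms
proof (induction Ss arbitrary: c)
  case Nil
  have "\<forall>i\<le>n. c i = {0}"
  proof (intro allI impI)
    fix i assume "i \<le> n"
    then have "sub (c i)" "c i \<subseteq> {0}" using Nil.prems(2) unfolding wchain_def by auto
    then show "c i = {0}" using sub_0 by blast
  qed
  then have "{i. i < n \<and> c i \<noteq> c (Suc i)} = {}" by auto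
  then show ?case unfolding chg_def by simp
next
  case (Cons S Ss)
  define M' where "M' = msum Ss"
  have sS: "simple_submod smul S" using Cons.prems(1) by simp
  have sSs: "set Ss \<subseteq> Collect (simple_submod smul)" using Cons.prems(1) by simp
  have subM': "sub M'" unfolding M'_def using sub_msum sSs simple_sub by blast
  have wc: "wchain (ssum S M') c n" using Cons.prems(2) by (simp add: M'_def)
  have ci: "sub (c i)" "c i \<subseteq> ssum S M'" if "i \<le> n" for i
    using wc that unfolding wchain_def by auto
  define d where "d = (\<lambda>i. c i \<inter> M')"
  define e where "e = (\<lambda>i. ssum (c i) M')"
  have wd: "wchain M' d n" unfolding wchain_def d_def
    using wc sub_Int[OF _ subM'] unfolding wchain_def by blast
  have IH: "chg d n \<le> length Ss" using Cons.IH[OF sSs] wd by (simp add: M'_def)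
  have subSM: "sub (ssum S M')" using sub_ssum[OF simple_sub[OF sS] subM'] .
  have ev: "e i = M' \<or> e i = ssum S M'" if "i \<le> n" for i
  proof (rule two_val[OF sS subM'])
    show "sub (e i)" unfolding e_def using sub_ssum[OF ci(1)[OF that] subM'] .
    show "M' \<subseteq> e i" unfolding e_def using ssum_mono_right sub_0 ci(1)[OF that] by blast
    have "e i \<subseteq> ssum (ssum S M') M'" unfolding e_def using ssum_mono ci(2)[OF that] by blast
    also have "\<dots> \<subseteq> ssum S M'"
      using ssum_sub_le[OF subset_refl _ subSM] ssum_mono_right[of S M'] sub_0[OF simple_sub[OF sS]]
      by blast
    finally show "e i \<subseteq> ssum S M'" .
  qed
  have emono: "e i \<subseteq> e j" if "i \<le> j" "j \<le> n" for i j
    unfolding e_def using ssum_mono wchain_mono[OF wc that] by blast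
  define E where "E = {i. i < n \<and> e i \<noteq> e (Suc i)}"
  have Echar: "e i = M' \<and> e (Suc i) = ssum S M'" if "i \<in> E" for i
  proof -
    have "i < n" "e i \<noteq> e (Suc i)" using that unfolding E_def by auto
    moreover have "e i \<subseteq> e (Suc i)" using emono \<open>i < n\<close> by simp
    moreover have "M' \<subseteq> ssum S M'" using ssum_mono_right sub_0[OF simple_sub[OF sS]] by blast
    ultimately show ?thesis using ev[of i] ev[of "Suc i"] by auto
  qed
  have "card E \<le> Suc 0"
  proof (subst card_le_Suc0_iff_eq)
    show "finite E" unfolding E_def by simp
    show "\<forall>a1\<in>E. \<forall>a2\<in>E. a1 = a2"
    proof (intro ballI, rule ccontr)
      fix a1 a2 assume a: "a1 \<in> E" "a2 \<in> E" "a1 \<noteq> a2"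
      have key: False if "i \<in> E" "j \<in> E" "i < j" for i j
      proof -
        have "j < n" using that unfolding E_def by simp
        have "e (Suc i) \<subseteq> e j" using emono that(3) \<open>j < n\<close> by simp
        then have "ssum S M' \<subseteq> M'" using Echar[OF that(1)] Echar[OF that(2)] by simp
        then have "e (Suc i) = e i" using Echar[OF that(1)] ssum_mono_right[of S M'] sub_0[OF simple_sub[OF sS]]
          by blast
        then show False using that(1) unfolding E_def by simp
      qed
      show False using a key by (metis linorder_neqE_nat)
    qed
  qed
  define D where "D = {i. i < n \<and> d i \<noteq> d (Suc i)}"
  define C where "C = {i. i < n \<and> c i \<noteq> c (Suc i)}"
  have "C \<subseteq> D \<union> E"
  proof
    fix i assume "i \<in> C"
    then have i: "i < n" "c i \<noteq> c (Suc i)" unfolding C_def by auto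
    have "c i \<subseteq> c (Suc i)" using wc i(1) unfolding wchain_def by simp
    then have "\<not> (d i = d (Suc i) \<and> e i = e (Suc i))"
      using modular[OF ci(1) ci(1) subM', of i "Suc i"] i unfolding d_def e_def by auto
    then show "i \<in> D \<union> E" using i unfolding D_def E_def by auto
  qed
  then have "card C \<le> card (D \<union> E)" by (intro card_mono) (auto simp: D_def E_def)
  also have "\<dots> \<le> card D + card E" by (rule card_Un_le)
  finally have "card C \<le> card D + card E" .
  moreover have "card D \<le> length Ss" using IH unfolding chg_def D_def .
  ultimately show ?case using \<open>card E \<le> Suc 0\<close> unfolding chg_def C_def by simp
qed

definition schain :: "'m set \<Rightarrow> (nat \<Rightarrow> 'm set) \<Rightarrow> nat \<Rightarrow> bool" where
  "schain N e p \<longleftrightarrow> e 0 = {0} \<and> e p = N \<and> (\<forall>i\<le>p. sub (e i)) \<and> (\<forall>i<p. e i \<subset> e (Suc i))"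

lemma schain_wchain: "schain N e p \<Longrightarrow> wchain N e p \<and> chg e p = p"
proof -
  assume s: "schain N e p"
  have w: "wchain N e p" unfolding wchain_def
  proof (intro conjI allI impI)
    fix i assume "i \<le> p"
    show "sub (e i)" using s \<open>i \<le> p\<close> unfolding schain_def by auto
    have ws: "wchain UNIV e p" using s unfolding wchain_def schain_def by auto
    show "e i \<subseteq> N" using wchain_mono[OF ws \<open>i \<le> p\<close> order_refl] s unfolding schain_def by auto
  next
    fix i assume "i < p" then show "e i \<subseteq> e (Suc i)" using s unfolding schain_def by auto
  qed
  moreover have "chg e p = p" by (rule chg_strict) (use s in \<open>auto simp: schain_def\<close>)
  ultimately show ?thesis by simp
qed

lemma extract_chain:
  assumes "wchain N c n" "sub N"
  shows "\<exists>p e. chg c n \<le> p \<and> schain N e p"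
  using assms
proof (induction n arbitrary: N)
  case 0
  have c0: "chg c 0 = 0" unfolding chg_def by simp
  show ?case
  proof (cases "N = {0}")
    case True
    then have "schain N (\<lambda>_. N) 0" unfolding schain_def using 0 by auto
    then show ?thesis using c0 by blast
  next
    case False
    then have "{0} \<subset> N" using sub_0[OF 0(2)] by blast
    then have "schain N (\<lambda>i. if i = 0 then {0} else N) 1"
      unfolding schain_def using 0(2) sub_zero_set by auto
    then show ?thesis using c0 by (intro exI[of _ 1]) auto
  qed
next
  case (Suc n)
  have wn: "wchain (c n) c n" using Suc.prems(1) wchain_mono[OF Suc.prems(1)]
    unfolding wchain_def by auto
  have sn: "sub (c n)" using Suc.prems(1) unfolding wchain_def by auto
  obtain p e where pe: "chg c n \<le> p" "schain (c n) e p" using Suc.IH[OF wn sn] by blast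
  have cle: "c n \<subseteq> c (Suc n)" "c (Suc n) \<subseteq> N" using Suc.prems(1) unfolding wchain_def by auto
  show ?case
  proof (cases "c n = N")
    case True
    then have "c (Suc n) = c n" using cle by blast
    then have "chg c (Suc n) = chg c n" using chg_Suc[of c n] by simp
    then show ?thesis using pe True by metis
  next
    case False
    define e' where "e' = (\<lambda>i. if i \<le> p then e i else N)"
    have "e p = c n" using pe(2) unfolding schain_def by simp
    have ecn: "e i \<subseteq> c n" if "i \<le> p" for i
      using schain_wchain[OF pe(2)] that unfolding wchain_def by auto
    have cN: "c n \<subset> N" using False cle by blast
    have "schain N e' (Suc p)" unfolding schain_def
    proof (intro conjI allI impI)
      show "e' 0 = {0}" using pe(2) unfolding schain_def e'_def by simp
      show "e' (Suc p) = N" unfolding e'_def by simp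
      fix i
      show "i \<le> Suc p \<Longrightarrow> sub (e' i)" using pe(2) Suc.prems(2) unfolding schain_def e'_def by auto
      assume "i < Suc p"
      then consider "i < p" | "i = p" by linarith
      then show "e' i \<subset> e' (Suc i)"
      proof cases
        case 1 then show ?thesis using pe(2) unfolding schain_def e'_def by auto
      next
        case 2 then show ?thesis using ecn[of p] cN unfolding e'_def by auto
      qed
    qed
    moreover have "chg c (Suc n) \<le> Suc p" using chg_Suc[of c n] pe(1) by simp
    ultimately show ?thesis by blast
  qed
qed

lemma le_mod_length:
  assumes bound: "\<And>c n. wchain UNIV c n \<Longrightarrow> chg c n \<le> B"
    and "wchain N c n" "sub N"
  shows "chg c n \<le> mod_length smul N"
proof -
  obtain p e where pe: "chg c n \<le> p" "schain N e p" using extract_chain[OF assms(2,3)] by blast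
  define X where "X = {n. \<exists>c::nat \<Rightarrow> 'm set. c 0 = {0} \<and> c n = N \<and>
      (\<forall>i\<le>n. is_submod smul UNIV (c i)) \<and> (\<forall>i<n. c i \<subset> c (Suc i))}"
  have "p \<in> X" using pe(2) unfolding X_def schain_def by blast
  moreover have "bdd_above X"
  proof (rule bdd_aboveI)
    fix q assume "q \<in> X"
    then obtain e' where "schain N e' q" unfolding X_def schain_def by blast
    then have "wchain N e' q" "chg e' q = q" using schain_wchain by auto
    then have "wchain UNIV e' q" unfolding wchain_def by auto
    then show "q \<le> B" using bound \<open>chg e' q = q\<close> by metis
  qed
  ultimately have "p \<le> Sup X" by (rule cSup_upper)
  then show ?thesis using pe(1) unfolding mod_length_def X_def by simp
qed

end



lemma ssum_left_commute: "ssum K (ssum S X) = ssum S (ssum K X)"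
  by (metis ssum_assoc ssum_commute)

lemma ssum_memI: "a \<in> A \<Longrightarrow> b \<in> B \<Longrightarrow> a + b \<in> ssum A B"
  unfolding ssum_def by blast

context lmod begin

lemma chain_append:
  assumes "wchain N c n" "N \<subseteq> N'" "N \<noteq> N'" "sub N'"
  shows "wchain N' (c(Suc n := N')) (Suc n) \<and> chg (c(Suc n := N')) (Suc n) = Suc (chg c n)"
proof
  let ?c = "c(Suc n := N')"
  have cn: "c n \<subseteq> N" using assms(1) unfolding wchain_def by auto
  show "wchain N' ?c (Suc n)" unfolding wchain_def
  proof (intro conjI allI impI)
    fix i assume "i \<le> Suc n"
    then show "sub (?c i)" "?c i \<subseteq> N'" using assms unfolding wchain_def by (auto simp: le_Suc_eq)
  next
    fix i assume "i < Suc n"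
    then show "?c i \<subseteq> ?c (Suc i)" using assms cn unfolding wchain_def by (auto simp: less_Suc_eq)
  qed
  have "chg ?c n = chg c n" by (rule chg_cong) auto
  moreover have "?c n \<noteq> ?c (Suc n)" using cn assms(2,3) by auto
  ultimately show "chg ?c (Suc n) = Suc (chg c n)" using chg_Suc[of ?c n] by simp
qed

lemma rel_ext:
  assumes "rel_strict K L" "set L \<subseteq> Collect sub" "sub K" "wchain K c n"
  shows "\<exists>c' n'. wchain (ssum K (msum L)) c' n' \<and> chg c' n' = chg c n + length L"
  using assms
proof (induction L)
  case Nil then show ?case by auto
next
  case (Cons S L)
  obtain c' n' where cn: "wchain (ssum K (msum L)) c' n'" "chg c' n' = chg c n + length L"
    using Cons by auto
  have sS: "sub S" and sL: "sub (msum L)" using Cons.prems(2) sub_msum by auto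
  let ?X = "ssum K (msum L)" and ?N = "ssum K (msum (S # L))"
  have "msum L \<subseteq> ssum S (msum L)" using ssum_mono_right sub_0[OF sS] by blast
  then have "ssum (msum L) K \<subseteq> ssum (ssum S (msum L)) K" by (rule ssum_mono)
  then have XN: "?X \<subseteq> ?N" by (simp add: ssum_commute)
  have "S \<subseteq> ?N"
  proof
    fix s assume "s \<in> S"
    then have "s + 0 \<in> ssum S (msum L)" using sub_0[OF sL] by (rule ssum_memI)
    then have "0 + (s + 0) \<in> ?N" using ssum_memI[OF sub_0[OF Cons.prems(3)]] by simp
    then show "s \<in> ?N" by simp
  qed
  moreover have "\<not> S \<subseteq> ?X" using Cons.prems(1) by simp
  ultimately have "?X \<noteq> ?N" by blast
  moreover have "sub ?N" using sub_ssum[OF Cons.prems(3) sub_ssum[OF sS sL]] by simp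
  ultimately have "wchain ?N (c'(Suc n' := ?N)) (Suc n') \<and> chg (c'(Suc n' := ?N)) (Suc n') = Suc (chg c' n')"
    using chain_append[OF cn(1) XN] by blast
  then show ?case using cn(2) by (intro exI) auto
qed

lemma greedy:
  assumes "set Ss \<subseteq> Collect sub" "sub K"
  shows "\<exists>L. set L \<subseteq> set Ss \<and> rel_strict K L \<and> ssum K (msum L) = ssum K (msum Ss)"
  using assms(1)
proof (induction Ss)
  case Nil then show ?case by (intro exI[of _ "[]"]) auto
next
  case (Cons S Ss)
  obtain L where L: "set L \<subseteq> set Ss" "rel_strict K L" "ssum K (msum L) = ssum K (msum Ss)"
    using Cons by auto
  have sS: "sub S" using Cons.prems by simp
  have sY: "sub (ssum K (msum L))" using sub_ssum[OF assms(2) sub_msum] L(1) Cons.prems by auto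
  have eq: "ssum K (msum (S # Ss)) = ssum S (ssum K (msum L))"
    using L(3) by (simp add: ssum_left_commute)
  show ?case
  proof (cases "S \<subseteq> ssum K (msum L)")
    case True
    then have "ssum K (msum (S # Ss)) = ssum K (msum L)"
      using eq ssum_absorb[OF True sY sub_0[OF sS]] by simp
    then show ?thesis using L by auto
  next
    case False
    then have "rel_strict K (S # L)" using L by simp
    moreover have "ssum K (msum (S # L)) = ssum K (msum (S # Ss))"
      using eq by (simp add: ssum_left_commute)
    ultimately show ?thesis using L(1) by (intro exI[of _ "S # L"]) auto
  qed
qed

lemma simple_list:
  assumes "fin_gen smul" "semisimple smul"
  shows "\<exists>Ss. set Ss \<subseteq> Collect (simple_submod smul) \<and> msum Ss = UNIV"
proof -
  define W where "W = {x. \<exists>Ss. set Ss \<subseteq> Collect (simple_submod smul) \<and> x \<in> msum Ss}"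
  have subW: "sub W" unfolding is_submod_def
  proof (intro conjI ballI)
    show "0 \<in> W" unfolding W_def by (intro CollectI exI[of _ "[]"]) simp
  next
    fix x y assume "x \<in> W" "y \<in> W"
    then obtain S1 S2 where s: "set S1 \<subseteq> Collect (simple_submod smul)" "x \<in> msum S1"
      "set S2 \<subseteq> Collect (simple_submod smul)" "y \<in> msum S2" unfolding W_def by blast
    then have "x + y \<in> msum (S1 @ S2)" unfolding msum_append ssum_def by blast
    then show "x + y \<in> W" unfolding W_def using s by (intro CollectI exI[of _ "S1 @ S2"]) auto
  next
    fix r x assume "x \<in> W"
    then obtain S1 where s: "set S1 \<subseteq> Collect (simple_submod smul)" "x \<in> msum S1"
      unfolding W_def by blast
    have "sub (msum S1)" using sub_msum s(1) simple_sub by blast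
    then have "smul r x \<in> msum S1" using s(2) sub_smul by blast
    then show "smul r x \<in> W" unfolding W_def using s by blast
  qed
  have "\<Union>{N. simple_submod smul N} \<subseteq> W"
  proof
    fix x assume "x \<in> \<Union>{N. simple_submod smul N}"
    then obtain S where "simple_submod smul S" "x \<in> S" by blast
    then show "x \<in> W" unfolding W_def by (intro CollectI exI[of _ "[S]"]) auto
  qed
  then have WU: "W = UNIV" using span_least[OF subW] assms(2) unfolding semisimple_def by blast
  obtain G where G: "finite G" "span smul UNIV G = UNIV" using assms(1) unfolding fin_gen_def by blast
  have "\<exists>Ss. set Ss \<subseteq> Collect (simple_submod smul) \<and> G \<subseteq> msum Ss" using G(1)
  proof (induction G rule: finite_induct)
    case empty then show ?case by (intro exI[of _ "[]"]) auto
  next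
    case (insert g G)
    then obtain Ss where Ss: "set Ss \<subseteq> Collect (simple_submod smul)" "G \<subseteq> msum Ss" by blast
    have "g \<in> W" using WU by simp
    then obtain S1 where S1: "set S1 \<subseteq> Collect (simple_submod smul)" "g \<in> msum S1"
      unfolding W_def by blast
    have "0 \<in> msum S1" "0 \<in> msum Ss" using msum_0 S1(1) Ss(1) simple_sub by blast+
    then have "insert g G \<subseteq> msum (S1 @ Ss)" unfolding msum_append ssum_def
      using S1(2) Ss(2) by force
    then show ?case using S1 Ss by (intro exI[of _ "S1 @ Ss"]) auto
  qed
  then obtain Ss where Ss: "set Ss \<subseteq> Collect (simple_submod smul)" "G \<subseteq> msum Ss" by blast
  have "sub (msum Ss)" using sub_msum Ss(1) simple_sub by blast
  then have "span smul UNIV G \<subseteq> msum Ss" using span_least Ss(2) by blast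
  then show ?thesis using G(2) Ss(1) by blast
qed

end



lemma chg_split:
  assumes "\<And>i. i < n \<Longrightarrow> c i \<noteq> c (Suc i) \<Longrightarrow> d i \<noteq> d (Suc i) \<or> e i \<noteq> e (Suc i)"
  shows "chg c n \<le> chg d n + chg e n"
proof -
  define C where "C = {i. i < n \<and> c i \<noteq> c (Suc i)}"
  define D where "D = {i. i < n \<and> d i \<noteq> d (Suc i)}"
  define E where "E = {i. i < n \<and> e i \<noteq> e (Suc i)}"
  have "C \<subseteq> D \<union> E" using assms unfolding C_def D_def E_def by blast
  then have "card C \<le> card (D \<union> E)" by (intro card_mono) (auto simp: D_def E_def)
  also have "\<dots> \<le> card D + card E" by (rule card_Un_le)
  finally show ?thesis unfolding chg_def C_def D_def E_def .
qed

context lmod begin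

lemma endo_add: "is_endo smul f \<Longrightarrow> f (x + y) = f x + f y"
  and endo_smul: "is_endo smul f \<Longrightarrow> f (smul r x) = smul r (f x)"
  unfolding is_endo_def by auto

lemma endo_0: "is_endo smul f \<Longrightarrow> f 0 = 0"
  by (metis add_cancel_right_right add_0 endo_add)

lemma endo_diff: "is_endo smul f \<Longrightarrow> f (x - y) = f x - f y"
  by (metis add_diff_cancel diff_add_cancel endo_add)

lemma sub_image: assumes "is_endo smul f" "sub A" shows "sub (f ` A)"
  unfolding is_submod_def
proof (intro conjI ballI)
  show "0 \<in> f ` A" using endo_0[OF assms(1)] sub_0[OF assms(2)] by (metis image_eqI)
next
  fix x y assume "x \<in> f ` A" "y \<in> f ` A"
  then obtain a b where "a \<in> A" "b \<in> A" "x = f a" "y = f b" by blast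
  then show "x + y \<in> f ` A" using endo_add[OF assms(1)] sub_add[OF assms(2)] by (metis image_eqI)
next
  fix r x assume "x \<in> f ` A"
  then obtain a where "a \<in> A" "x = f a" by blast
  then show "smul r x \<in> f ` A" using endo_smul[OF assms(1)] sub_smul[OF assms(2)] by (metis image_eqI)
qed

lemma sub_ker: assumes "is_endo smul f" shows "sub {x. f x = 0}"
  unfolding is_submod_def using endo_0[OF assms] endo_add[OF assms] endo_smul[OF assms] by auto

lemma ker_modular: assumes "is_endo smul f" "sub A" "sub B" "A \<subseteq> B"
  "A \<inter> {x. f x = 0} = B \<inter> {x. f x = 0}" "f ` A = f ` B" shows "A = B"
proof
  show "B \<subseteq> A"
  proof
    fix b assume b: "b \<in> B"
    then have "f b \<in> f ` A" using assms(6) by blast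
    then obtain a where a: "a \<in> A" "f a = f b" by (metis imageE)
    have "b - a \<in> B" using sub_diff[OF assms(3) b] a(1) assms(4) by blast
    moreover have "f (b - a) = 0" using endo_diff[OF assms(1)] a(2) by simp
    ultimately have "b - a \<in> A" using assms(5) by blast
    then have "(b - a) + a \<in> A" using sub_add[OF assms(2) _ a(1)] by blast
    then show "b \<in> A" by simp
  qed
qed (rule assms(4))

definition pick :: "'m set \<Rightarrow> 'm" where "pick S = (SOME x. x \<in> S \<and> x \<noteq> 0)"

lemma msum_span: "set L \<subseteq> Collect (simple_submod smul) \<Longrightarrow> msum L \<subseteq> span smul UNIV (set (map pick L))"
proof (induction L)
  case Nil then show ?case using sub_0[OF span_sub] by auto
next
  case (Cons S L)
  have sS: "simple_submod smul S" using Cons.prems by simp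
  have "pick S \<in> S \<and> pick S \<noteq> 0" unfolding pick_def using simple_ne[OF sS] by (metis (mono_tags, lifting) someI_ex)
  then have "S = span smul UNIV {pick S}" using simple_gen[OF sS] by auto
  also have "\<dots> \<subseteq> span smul UNIV (set (map pick (S # L)))"
    by (intro span_least[OF span_sub]) (use span_sup[of "set (map pick (S # L))"] in auto)
  finally have "S \<subseteq> span smul UNIV (set (map pick (S # L)))" .
  moreover have "msum L \<subseteq> span smul UNIV (set (map pick (S # L)))"
    using Cons span_least[OF span_sub, of "set (map pick L)"] span_sup[of "set (map pick (S # L))"] by auto
  ultimately show ?case using ssum_sub_le[OF _ _ span_sub] by simp
qed

lemma gens:
  assumes fg: "fin_gen smul" and ss: "semisimple smul" and en: "is_endo smul \<phi>"
  shows "\<exists>H U. length H \<le> mod_length smul UNIV \<and> length U \<le> mod_length smul {x. \<phi> x = 0} \<and>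
     span smul UNIV (set H) = UNIV \<and> UNIV = ssum (range \<phi>) (span smul UNIV (set U))"
proof -
  obtain Ss where Ss: "set Ss \<subseteq> Collect (simple_submod smul)" "msum Ss = UNIV"
    using simple_list[OF fg ss] by blast
  have Ssub: "set Ss \<subseteq> Collect sub" using Ss(1) simple_sub by blast
  obtain L where L: "set L \<subseteq> set Ss" "rel_strict {0} L" "ssum {0} (msum L) = ssum {0} (msum Ss)"
    using greedy[OF Ssub sub_zero_set] by blast
  have LU: "msum L = UNIV" using L(3) Ss(2) by simp
  have Lsimp: "set L \<subseteq> Collect (simple_submod smul)" using L(1) Ss(1) by blast
  have Lsub: "set L \<subseteq> Collect sub" using L(1) Ssub by blast
  have bound: "chg c n \<le> length L" if "wchain UNIV c n" for c n
    using chain_bound[OF Lsimp] that LU by simp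
  have w0: "wchain {0} (\<lambda>_. {0}) 0" unfolding wchain_def using sub_zero_set by simp
  obtain c0 n0 where c0: "wchain UNIV c0 n0" "chg c0 n0 = length L"
    using rel_ext[OF L(2) Lsub sub_zero_set w0] LU unfolding chg_def by auto
  have dge: "length L \<le> mod_length smul UNIV"
    using le_mod_length[OF bound c0(1) sub_UNIV] c0(2) by simp
  define H where "H = map pick L"
  have H: "span smul UNIV (set H) = UNIV"
    using msum_span[OF Lsimp] LU unfolding H_def by blast
  define K where "K = range \<phi>"
  have subK: "sub K" unfolding K_def using sub_image[OF en sub_UNIV] .
  obtain L' where L': "set L' \<subseteq> set Ss" "rel_strict K L'" "ssum K (msum L') = ssum K (msum Ss)"
    using greedy[OF Ssub subK] by blast
  have KU: "ssum K UNIV = UNIV" using ssum_mono_right[OF sub_0[OF subK]] by blast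
  have L'U: "ssum K (msum L') = UNIV" using L'(3) Ss(2) KU by simp
  have L'simp: "set L' \<subseteq> Collect (simple_submod smul)" using L'(1) Ss(1) by blast
  have L'sub: "set L' \<subseteq> Collect sub" using L'(1) Ssub by blast
  define U where "U = map pick L'"
  have "ssum K (msum L') \<subseteq> ssum K (span smul UNIV (set U))"
    using ssum_mono[OF msum_span[OF L'simp], of K] unfolding U_def by (simp add: ssum_commute)
  then have UU: "UNIV = ssum K (span smul UNIV (set U))" using L'U by blast
  define kr where "kr = {x. \<phi> x = 0}"
  have subkr: "sub kr" unfolding kr_def using sub_ker[OF en] .
  define d where "d = (\<lambda>i. c0 i \<inter> kr)"
  define e where "e = (\<lambda>i. \<phi> ` c0 i)"
  have wd: "wchain kr d n0" using c0(1) sub_Int[OF _ subkr] unfolding wchain_def d_def by blast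
  have we: "wchain K e n0" using c0(1) sub_image[OF en] unfolding wchain_def e_def K_def by blast
  have split: "chg c0 n0 \<le> chg d n0 + chg e n0"
  proof (rule chg_split)
    fix i assume i: "i < n0" "c0 i \<noteq> c0 (Suc i)"
    have "sub (c0 i)" "sub (c0 (Suc i))" "c0 i \<subseteq> c0 (Suc i)" using c0(1) i(1) unfolding wchain_def by auto
    then show "d i \<noteq> d (Suc i) \<or> e i \<noteq> e (Suc i)"
      using ker_modular[OF en] i(2) unfolding d_def e_def kr_def by blast
  qed
  obtain c1 n1 where c1: "wchain (ssum K (msum L')) c1 n1" "chg c1 n1 = chg e n0 + length L'"
    using rel_ext[OF L'(2) L'sub subK we] by blast
  have "chg e n0 + length L' \<le> length L" using bound c1 L'U by metis
  moreover have "chg d n0 \<le> mod_length smul kr" using le_mod_length[OF bound wd subkr] .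
  ultimately have "length L' \<le> mod_length smul kr" using split c0(2) by linarith
  then have "length U \<le> mod_length smul {x. \<phi> x = 0}" unfolding U_def kr_def by simp
  moreover have "length H \<le> mod_length smul UNIV" using dge unfolding H_def by simp
  ultimately show ?thesis using H UU unfolding K_def by blast
qed

end



lemma sum_app: "(sum f A) x = sum (\<lambda>a. f a x) A"
  by (induction A rule: infinite_finite_induct) auto

lemma gspan_sub: "is_submod act S (span act S X)"
  unfolding span_def is_submod_def by auto
lemma gspan_sup: "X \<subseteq> span act S X"
  unfolding span_def by auto
lemma gsub_sum: "is_submod act S N \<Longrightarrow> (\<And>i. i \<in> A \<Longrightarrow> f i \<in> N) \<Longrightarrow> sum f A \<in> N"
  unfolding is_submod_def by (induction A rule: infinite_finite_induct) auto

context lmod begin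

lemma funpow_endo: "is_endo smul f \<Longrightarrow> is_endo smul (f ^^ n)"
  by (induction n) (auto simp: is_endo_def)

lemma uniq:
  assumes en: "is_endo smul \<phi>" and nil: "\<phi> ^^ k = (\<lambda>_. 0)"
    and UU: "UNIV = ssum (range \<phi>) (span smul UNIV (set U))"
    and p1: "\<psi>1 \<in> centralizer smul \<phi>" and p2: "\<psi>2 \<in> centralizer smul \<phi>"
    and ag: "\<And>u. u \<in> set U \<Longrightarrow> \<psi>1 u = \<psi>2 u"
  shows "\<psi>1 = \<psi>2"
proof -
  have e1: "is_endo smul \<psi>1" and c1: "\<And>x. \<psi>1 (\<phi> x) = \<phi> (\<psi>1 x)"
    using p1 unfolding centralizer_def by (auto simp: fun_eq_iff)
  have e2: "is_endo smul \<psi>2" and c2: "\<And>x. \<psi>2 (\<phi> x) = \<phi> (\<psi>2 x)"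
    using p2 unfolding centralizer_def by (auto simp: fun_eq_iff)
  define E where "E = {x. \<psi>1 x = \<psi>2 x}"
  have subE: "sub E" unfolding is_submod_def E_def
    using endo_0[OF e1] endo_0[OF e2] endo_add[OF e1] endo_add[OF e2] endo_smul[OF e1] endo_smul[OF e2]
    by auto
  have phE: "\<phi> x \<in> E" if "x \<in> E" for x using that c1 c2 unfolding E_def by auto
  have phnE: "(\<phi> ^^ n) x \<in> E" if "x \<in> E" for x n
    using that by (induction n) (auto intro: phE)
  have TE: "span smul UNIV (set U) \<subseteq> E" using span_least[OF subE] ag unfolding E_def by blast
  have "\<forall>x. \<exists>e\<in>E. \<exists>y. x = e + (\<phi> ^^ n) y" for n
  proof (induction n)
    case 0 then show ?case using sub_0[OF subE] by (metis add_0 funpow_0)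
  next
    case (Suc n)
    show ?case
    proof
      fix x
      obtain e y where ey: "e \<in> E" "x = e + (\<phi> ^^ n) y" using Suc by blast
      have "y \<in> ssum (range \<phi>) (span smul UNIV (set U))" using UU by blast
      then obtain z t where zt: "t \<in> span smul UNIV (set U)" "y = \<phi> z + t" unfolding ssum_def by blast
      have "(\<phi> ^^ n) y = (\<phi> ^^ n) (\<phi> z) + (\<phi> ^^ n) t"
        using endo_add[OF funpow_endo[OF en]] zt(2) by simp
      also have "(\<phi> ^^ n) (\<phi> z) = (\<phi> ^^ Suc n) z" by (simp add: funpow_swap1)
      finally have "x = (e + (\<phi> ^^ n) t) + (\<phi> ^^ Suc n) z" using ey(2) by (simp add: add_ac)
      moreover have "e + (\<phi> ^^ n) t \<in> E" using sub_add[OF subE ey(1) phnE] zt(1) TE by blast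
      ultimately show "\<exists>e\<in>E. \<exists>y. x = e + (\<phi> ^^ Suc n) y" by blast
    qed
  qed
  then have "x \<in> E" for x using nil by (metis add.right_neutral)
  then show ?thesis unfolding E_def by auto
qed

lemma span_comb:
  "span smul UNIV (set H) \<subseteq> {x. \<exists>c. x = (\<Sum>i<length H. smul (c i) (H ! i))}"
proof (rule span_least)
  let ?W = "{x. \<exists>c. x = (\<Sum>i<length H. smul (c i) (H ! i))}"
  show "sub ?W" unfolding is_submod_def
  proof (intro conjI ballI)
    show "0 \<in> ?W" by (intro CollectI exI[of _ "\<lambda>_. 0"]) simp
  next
    fix x y assume "x \<in> ?W" "y \<in> ?W"
    then obtain c c' where "x = (\<Sum>i<length H. smul (c i) (H ! i))" "y = (\<Sum>i<length H. smul (c' i) (H ! i))"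
      by blast
    then have "x + y = (\<Sum>i<length H. smul (c i + c' i) (H ! i))" by (simp add: sm_addr sum.distrib)
    then show "x + y \<in> ?W" by (intro CollectI exI[of _ "\<lambda>i. c i + c' i"])
  next
    fix r x assume "x \<in> ?W"
    then obtain c where "x = (\<Sum>i<length H. smul (c i) (H ! i))" by blast
    then have "smul r x = (\<Sum>i<length H. smul (r * c i) (H ! i))" by (simp add: sm_sum sm_mult)
    then show "smul r x \<in> ?W" by (intro CollectI exI[of _ "\<lambda>i. r * c i"])
  qed
  show "set H \<subseteq> ?W"
  proof
    fix x assume "x \<in> set H"
    then obtain k where k: "k < length H" "x = H ! k" by (metis in_set_conv_nth)
    have "(\<Sum>i<length H. smul (if i = k then 1 else 0) (H ! i)) = (\<Sum>i<length H. if i = k then H ! i else 0)"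
      by (rule sum.cong) auto
    also have "\<dots> = H ! k" using k(1) by simp
    finally show "x \<in> ?W" using k(2) by (intro CollectI exI[of _ "\<lambda>i. if i = k then 1 else 0"]) simp
  qed
qed

end



theorem theorem4p6:
  fixes smul :: "'r::ring_1 \<Rightarrow> 'm::ab_group_add \<Rightarrow> 'm"
    and \<phi> :: "'m \<Rightarrow> 'm"
  assumes "left_module smul"
    and "fin_gen smul"
    and "semisimple smul"
    and "is_endo smul \<phi>"
    and "\<exists>k. \<phi> ^^ k = (\<lambda>_. 0)"
  shows "let d = mod_length smul UNIV; m = mod_length smul {x. \<phi> x = 0} in
    \<exists>gs :: (nat \<Rightarrow> nat \<Rightarrow> 'r poly) list. length gs = m * d \<and> set gs \<subseteq> poly_mats m \<and>
    (\<exists>N. N \<subseteq> span mat_smul UNIV (set gs) \<and> is_submod mat_smul ring_center N \<and>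
      (\<exists>f. (\<forall>x\<in>N. \<forall>y\<in>N. f (x + y) = f x + f y) \<and>
           (\<forall>z\<in>ring_center. \<forall>x\<in>N. f (mat_smul z x) = hom_smul smul z (f x)) \<and>
           f ` N = centralizer smul \<phi>))"
proof -
  interpret lmod smul by (rule lmod.intro) (rule assms(1))
  have en: "is_endo smul \<phi>" by (rule assms(4))
  obtain k where nil: "\<phi> ^^ k = (\<lambda>_. 0)" using assms(5) by blast
  define d where "d = mod_length smul UNIV"
  define m where "m = mod_length smul {x. \<phi> x = 0}"
  obtain H U where HU: "length H \<le> d" "length U \<le> m" "span smul UNIV (set H) = UNIV"
      "UNIV = ssum (range \<phi>) (span smul UNIV (set U))"
    using gens[OF assms(2,3,4)] unfolding d_def m_def by blast
  define g :: "nat \<Rightarrow> nat \<Rightarrow> nat \<Rightarrow> nat \<Rightarrow> 'r poly" where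
    "g j i = (\<lambda>a b. if a = j \<and> b = 0 then monom 1 i else 0)" for j i
  define gs where "gs = map (\<lambda>p. g (fst p) (snd p)) (List.product [0..<m] [0..<d])"
  have len: "length gs = m * d" unfolding gs_def by (simp add: length_product)
  have gsP: "set gs \<subseteq> poly_mats m" unfolding gs_def poly_mats_def g_def by auto
  have gin: "g j i \<in> set gs" if "j < m" "i < d" for j i
    unfolding gs_def using that by (auto intro!: image_eqI[of _ _ "(j, i)"])
  define C where "C = centralizer smul \<phi>"
  define P where "P A \<psi> \<longleftrightarrow> (\<forall>j<length U. \<psi> (U ! j) = (\<Sum>i<length H. smul (coeff (A j 0) i) (H ! i)))"
    for A :: "nat \<Rightarrow> nat \<Rightarrow> 'r poly" and \<psi>
  define SP where "SP = span mat_smul UNIV (set gs)"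
  have subSP: "is_submod mat_smul UNIV SP" unfolding SP_def by (rule gspan_sub)
  define N where "N = {A \<in> SP. \<exists>\<psi>\<in>C. P A \<psi>}"
  define f where "f A = (SOME \<psi>. \<psi> \<in> C \<and> P A \<psi>)" for A
  have un: "\<psi>1 = \<psi>2" if "\<psi>1 \<in> C" "\<psi>2 \<in> C" "P A \<psi>1" "P A \<psi>2" for \<psi>1 \<psi>2 A
  proof (rule uniq[OF en nil HU(4)])
    show "\<psi>1 \<in> centralizer smul \<phi>" "\<psi>2 \<in> centralizer smul \<phi>" using that unfolding C_def by auto
    fix u assume "u \<in> set U"
    then obtain j where "j < length U" "u = U ! j" by (metis in_set_conv_nth)
    then show "\<psi>1 u = \<psi>2 u" using that(3,4) unfolding P_def by simp
  qed
  have fN: "f A \<in> C \<and> P A (f A)" if "A \<in> N" for A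
    using that unfolding N_def f_def by (metis (mono_tags, lifting) mem_Collect_eq someI_ex)
  have fchar: "f A = \<psi>" if "A \<in> N" "\<psi> \<in> C" "P A \<psi>" for A \<psi>
    using un fN that by blast
  have Cendo: "is_endo smul \<psi>" and Ccomm: "\<And>x. \<psi> (\<phi> x) = \<phi> (\<psi> x)" if "\<psi> \<in> C" for \<psi>
    using that unfolding C_def centralizer_def by (auto simp: fun_eq_iff)
  have C_0: "0 \<in> C" unfolding C_def centralizer_def is_endo_def using endo_0[OF en] by (auto simp: fun_eq_iff)
  have C_add: "\<psi>1 + \<psi>2 \<in> C" if "\<psi>1 \<in> C" "\<psi>2 \<in> C" for \<psi>1 \<psi>2
  proof -
    have "is_endo smul (\<psi>1 + \<psi>2)" unfolding is_endo_def
      using endo_add[OF Cendo[OF that(1)]] endo_add[OF Cendo[OF that(2)]]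
        endo_smul[OF Cendo[OF that(1)]] endo_smul[OF Cendo[OF that(2)]] by (simp add: add_ac sm_add)
    moreover have "(\<psi>1 + \<psi>2) \<circ> \<phi> = \<phi> \<circ> (\<psi>1 + \<psi>2)"
      using Ccomm[OF that(1)] Ccomm[OF that(2)] endo_add[OF en] by (auto simp: fun_eq_iff)
    ultimately show ?thesis unfolding C_def centralizer_def by simp
  qed
  have C_z: "hom_smul smul z \<psi> \<in> C" if "z \<in> ring_center" "\<psi> \<in> C" for z \<psi>
  proof -
    have zc: "z * r = r * z" for r using that(1) unfolding ring_center_def by simp
    have "is_endo smul (hom_smul smul z \<psi>)" unfolding is_endo_def hom_smul_def
      using endo_add[OF Cendo[OF that(2)]] endo_smul[OF Cendo[OF that(2)]]
      by (simp add: sm_add flip: sm_mult) (simp add: zc)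
    moreover have "hom_smul smul z \<psi> \<circ> \<phi> = \<phi> \<circ> hom_smul smul z \<psi>"
      using Ccomm[OF that(2)] endo_smul[OF en] by (auto simp: fun_eq_iff hom_smul_def)
    ultimately show ?thesis unfolding C_def centralizer_def by simp
  qed
  have P_0: "P 0 0" unfolding P_def by simp
  have P_add: "P (A + B) (\<psi>1 + \<psi>2)" if "P A \<psi>1" "P B \<psi>2" for A B \<psi>1 \<psi>2
    using that unfolding P_def by (simp add: sm_addr sum.distrib)
  have cz: "coeff (mat_smul z A j 0) i = z * coeff (A j 0) i" for z A j i
    unfolding mat_smul_def by (simp add: coeff_map_poly)
  have P_z: "P (mat_smul z A) (hom_smul smul z \<psi>)" if "P A \<psi>" for z A \<psi>
    using that unfolding P_def hom_smul_def by (simp add: cz sm_mult sm_sum)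
  have NSP: "N \<subseteq> SP" unfolding N_def by blast
  have subN: "is_submod mat_smul ring_center N" unfolding is_submod_def
  proof (intro conjI ballI)
    show "0 \<in> N" unfolding N_def using subSP C_0 P_0 unfolding is_submod_def by blast
  next
    fix x y assume "x \<in> N" "y \<in> N"
    then obtain \<psi>1 \<psi>2 where "x \<in> SP" "y \<in> SP" "\<psi>1 \<in> C" "\<psi>2 \<in> C" "P x \<psi>1" "P y \<psi>2"
      unfolding N_def by blast
    then show "x + y \<in> N" unfolding N_def using subSP C_add P_add unfolding is_submod_def by blast
  next
    fix z :: 'r and x assume "z \<in> ring_center" "x \<in> N"
    then obtain \<psi> where "x \<in> SP" "\<psi> \<in> C" "P x \<psi>" unfolding N_def by blast
    then show "mat_smul z x \<in> N" unfolding N_def using subSP C_z[OF \<open>z \<in> ring_center\<close>] P_z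
      unfolding is_submod_def by blast
  qed
  have f_add: "\<forall>x\<in>N. \<forall>y\<in>N. f (x + y) = f x + f y"
  proof (intro ballI)
    fix x y assume xy: "x \<in> N" "y \<in> N"
    then have "x + y \<in> N" using subN unfolding is_submod_def by blast
    moreover have a: "f x \<in> C" "P x (f x)" "f y \<in> C" "P y (f y)" using fN xy by auto
    ultimately show "f (x + y) = f x + f y" using fchar[OF _ C_add[OF a(1,3)] P_add[OF a(2,4)]] by simp
  qed
  have f_z: "\<forall>z\<in>ring_center. \<forall>x\<in>N. f (mat_smul z x) = hom_smul smul z (f x)"
  proof (intro ballI)
    fix z :: 'r and x assume zx: "z \<in> ring_center" "x \<in> N"
    then have "mat_smul z x \<in> N" using subN unfolding is_submod_def by blast
    moreover have a: "f x \<in> C" "P x (f x)" using fN zx by auto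
    ultimately show "f (mat_smul z x) = hom_smul smul z (f x)"
      using fchar[OF _ C_z[OF zx(1) a(1)] P_z[OF a(2)]] by simp
  qed
  have surj: "\<psi> \<in> f ` N" if "\<psi> \<in> C" for \<psi>
  proof -
    define c where "c j = (SOME c. \<psi> (U ! j) = (\<Sum>i<length H. smul (c i) (H ! i)))" for j
    have cP: "\<psi> (U ! j) = (\<Sum>i<length H. smul (c j i) (H ! i))" for j
    proof -
      have "\<psi> (U ! j) \<in> span smul UNIV (set H)" using HU(3) by (rule ssubst) (rule UNIV_I)
      from subsetD[OF span_comb[of H] this]
      obtain c0 where "\<psi> (U ! j) = (\<Sum>i<length H. smul (c0 i) (H ! i))" by blast
      then show ?thesis unfolding c_def
        by (rule someI[where P = "\<lambda>c. \<psi> (U ! j) = (\<Sum>i<length H. smul (c i) (H ! i))"])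
    qed
    define A where "A = (\<Sum>j<length U. \<Sum>i<length H. mat_smul (c j i) (g j i))"
    have gSP: "mat_smul (c j i) (g j i) \<in> SP" if "j < length U" "i < length H" for j i
    proof -
      have "g j i \<in> set gs" using gin[of j i] that HU(1,2) by simp
      then have "g j i \<in> SP" using gspan_sup[of "set gs" mat_smul UNIV] unfolding SP_def by blast
      then show ?thesis using subSP unfolding is_submod_def by blast
    qed
    have "A \<in> SP" unfolding A_def
    proof (rule gsub_sum[OF subSP])
      fix j assume j: "j \<in> {..<length U}"
      show "(\<Sum>i<length H. mat_smul (c j i) (g j i)) \<in> SP"
        by (rule gsub_sum[OF subSP]) (use gSP j in simp)
    qed
    moreover have "P A \<psi>" unfolding P_def
    proof (intro allI impI)
      fix j assume j: "j < length U"
      have ms: "mat_smul r (g j' i) j 0 = (if j = j' then monom r i else 0)" for r j' i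
        unfolding mat_smul_def g_def by (simp add: map_poly_monom)
      have "A j 0 = (\<Sum>j'<length U. \<Sum>i<length H. mat_smul (c j' i) (g j' i) j 0)"
        unfolding A_def by (simp add: sum_app)
      also have "\<dots> = (\<Sum>j'<length U. \<Sum>i<length H. if j = j' then monom (c j' i) i else 0)"
        by (simp only: ms)
      also have "\<dots> = (\<Sum>i<length H. \<Sum>j'<length U. if j = j' then monom (c j' i) i else 0)"
        by (rule sum.swap)
      also have "\<dots> = (\<Sum>i<length H. monom (c j i) i)" using j by simp
      finally have Aj: "A j 0 = (\<Sum>i<length H. monom (c j i) i)" .
      have "coeff (A j 0) i0 = c j i0" if "i0 < length H" for i0
      proof -
        have "coeff (A j 0) i0 = (\<Sum>i<length H. if i = i0 then c j i else 0)"
          unfolding Aj coeff_sum by (simp add: coeff_monom)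
        also have "\<dots> = c j i0" using that by simp
        finally show ?thesis .
      qed
      then have "(\<Sum>i<length H. smul (coeff (A j 0) i) (H ! i)) = (\<Sum>i<length H. smul (c j i) (H ! i))"
        by (intro sum.cong) auto
      then show "\<psi> (U ! j) = (\<Sum>i<length H. smul (coeff (A j 0) i) (H ! i))"
        using cP[of j] by simp
    qed
    ultimately have "A \<in> N" using that unfolding N_def by blast
    moreover have "f A = \<psi>" using fchar[OF \<open>A \<in> N\<close> that \<open>P A \<psi>\<close>] .
    ultimately show ?thesis by blast
  qed
  have img: "f ` N = centralizer smul \<phi>" using fN surj unfolding C_def by blast
  have "\<exists>gs :: (nat \<Rightarrow> nat \<Rightarrow> 'r poly) list. length gs = m * d \<and> set gs \<subseteq> poly_mats m \<and>
    (\<exists>N. N \<subseteq> span mat_smul UNIV (set gs) \<and> is_submod mat_smul ring_center N \<and>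
      (\<exists>f. (\<forall>x\<in>N. \<forall>y\<in>N. f (x + y) = f x + f y) \<and>
           (\<forall>z\<in>ring_center. \<forall>x\<in>N. f (mat_smul z x) = hom_smul smul z (f x)) \<and>
           f ` N = centralizer smul \<phi>))"
    using len gsP NSP subN f_add f_z img unfolding SP_def by blast
  then show ?thesis unfolding Let_def d_def m_def .
qed



end
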